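(* Let $G$ be a weighted finite graph and let $f_1,\ldots,f_k:V\to\mathbb{R}$ be orthonormal in $l^2(V,\mu)$. Let $F:V\to\mathbb{R}^k$, $F(v)=(f_1(v),\ldots,f_k(v))$. If $S\subseteq V$ satisfies $\mathrm{diam}(S\cap\widetilde{V}_F,\overline{d}_F)\leq r$ for some $0<r<1$, then \[ \mathcal{E}_S\leq\frac{1}{k(1-r^2)}\mathcal{E}_V. \]
   Context: $G=(V,E,w)$ is a finite undirected graph with positive symmetric edge weights, degrees $d_u=\sum_vw_{uv}$, and measure $\mu(u)=d_u$; $l^2(V,\mu)$ has inner product $(f,g)_\mu=\sum_u\mu(u)f(u)g(u)$. For $S\subseteq V$, $\mathcal{E}_S:=\sum_{u\in S}\mu(u)\|F(u)\|^2$ (Euclidean norm). $\widetilde{V}_F:=\{v\in V:F(v)\neq0\}$, and for $u,v\in\widetilde{V}_F$, \[ \overline{d}_F(u,v):=\min\left\{\left\|\tfrac{F(u)}{\|F(u)\|}-\tfrac{F(v)}{\|F(v)\|}\right\|,\left\|\tfrac{F(u)}{\|F(u)\|}+\tfrac{F(v)}{\|F(v)\|}\right\|\right\}, \] a pseudometric on $\widetilde{V}_F$; $\mathrm{diam}$ is the supremum of $\overline{d}_F$ over pairs of points of the set. *)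

theory Defs
  imports "HOL-Analysis.Analysis"
begin

text \<open>Weighted finite graph: vertex set = UNIV of a finite type 'v, weights
  w :: 'v => 'v => real (symmetric, nonnegative; w u v > 0 iff uv is an edge).
  The k orthonormal functions are indexed by a finite type 'k, k = CARD('k).\<close>

definition deg :: "('v::finite \<Rightarrow> 'v \<Rightarrow> real) \<Rightarrow> 'v \<Rightarrow> real" where
  "deg w u = (\<Sum>v\<in>UNIV. w u v)"

definition l2_inner :: "('v::finite \<Rightarrow> 'v \<Rightarrow> real) \<Rightarrow> ('v \<Rightarrow> real) \<Rightarrow> ('v \<Rightarrow> real) \<Rightarrow> real" where
  "l2_inner w f g = (\<Sum>u\<in>UNIV. deg w u * f u * g u)"

definition Fvec :: "('k::finite \<Rightarrow> 'v \<Rightarrow> real) \<Rightarrow> 'v \<Rightarrow> real ^ 'k" where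
  "Fvec f v = (\<chi> i. f i v)"

definition VF :: "('k::finite \<Rightarrow> 'v \<Rightarrow> real) \<Rightarrow> 'v set" where
  "VF f = {v. Fvec f v \<noteq> 0}"

definition dbar :: "('k::finite \<Rightarrow> 'v \<Rightarrow> real) \<Rightarrow> 'v \<Rightarrow> 'v \<Rightarrow> real" where
  "dbar f u v = min
     (norm ((1 / norm (Fvec f u)) *\<^sub>R Fvec f u - (1 / norm (Fvec f v)) *\<^sub>R Fvec f v))
     (norm ((1 / norm (Fvec f u)) *\<^sub>R Fvec f u + (1 / norm (Fvec f v)) *\<^sub>R Fvec f v))"

definition diam_dbar :: "('k::finite \<Rightarrow> 'v \<Rightarrow> real) \<Rightarrow> 'v set \<Rightarrow> real" where
  "diam_dbar f S = (if S = {} then 0 else Sup {dbar f u v | u v. u \<in> S \<and> v \<in> S})"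

definition energy :: "('v::finite \<Rightarrow> 'v \<Rightarrow> real) \<Rightarrow> ('k::finite \<Rightarrow> 'v \<Rightarrow> real) \<Rightarrow> 'v set \<Rightarrow> real" where
  "energy w f S = (\<Sum>u\<in>S. deg w u * (norm (Fvec f u))\<^sup>2)"

end

theory Submission
  imports Defs
begin

lemma sum_identity:
  fixes w :: "'v::finite \<Rightarrow> 'v \<Rightarrow> real" and f :: "'k::finite \<Rightarrow> 'v \<Rightarrow> real"
  assumes orthonormal: "\<And>i j. l2_inner w (f i) (f j) = (if i = j then 1 else 0)"
  shows "(\<Sum>v\<in>UNIV. deg w v * (x \<bullet> Fvec f v)^2) = (\<Sum>i\<in>UNIV. (x$i)^2)"
proof -
  have e: "(x \<bullet> Fvec f v)^2 = (\<Sum>i\<in>UNIV. \<Sum>j\<in>UNIV. x$i * x$j * (f i v * f j v))" for v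
    by (simp add: inner_vec_def Fvec_def power2_eq_square sum_product algebra_simps)
  have "(\<Sum>v\<in>UNIV. deg w v * (x \<bullet> Fvec f v)^2)
      = (\<Sum>v\<in>UNIV. \<Sum>i\<in>UNIV. \<Sum>j\<in>UNIV. x$i * x$j * (deg w v * f i v * f j v))"
    by (simp add: e sum_distrib_left algebra_simps)
  also have "\<dots> = (\<Sum>i\<in>UNIV. \<Sum>v\<in>UNIV. \<Sum>j\<in>UNIV. x$i * x$j * (deg w v * f i v * f j v))"
    by (rule sum.swap)
  also have "\<dots> = (\<Sum>i\<in>UNIV. \<Sum>j\<in>UNIV. \<Sum>v\<in>UNIV. x$i * x$j * (deg w v * f i v * f j v))"
    by (rule sum.cong[OF refl], rule sum.swap)
  also have "\<dots> = (\<Sum>i\<in>UNIV. \<Sum>j\<in>UNIV. x$i * x$j * l2_inner w (f i) (f j))"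
    by (simp add: l2_inner_def sum_distrib_left)
  also have "\<dots> = (\<Sum>i\<in>UNIV. (x$i)^2)"
    by (simp add: orthonormal power2_eq_square if_distrib cong: if_cong)
  finally show ?thesis .
qed

lemma unit_bound:
  fixes a b :: "real ^ 'k::finite"
  assumes "norm a = 1" "norm b = 1" "min (norm (a - b)) (norm (a + b)) \<le> r" "0 < r" "r < 1"
  shows "1 - r^2 \<le> (a \<bullet> b)^2"
proof -
  have aa: "a \<bullet> a = 1" "b \<bullet> b = 1" using assms(1,2) by (simp_all add: norm_eq_1)
  have m: "(norm (a - b))^2 = 2 - 2 * (a \<bullet> b)" "(norm (a + b))^2 = 2 + 2 * (a \<bullet> b)"
    by (simp_all add: power2_norm_eq_inner inner_diff inner_add aa inner_commute)
  have "(norm (a - b))^2 \<le> r^2 \<or> (norm (a + b))^2 \<le> r^2"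
    using assms(3,4) by (metis min_le_iff_disj norm_ge_zero power_mono)
  hence h1: "1 - r^2/2 \<le> \<bar>a \<bullet> b\<bar>" using m by auto
  have rr: "r*r < 1*1" using assms(4,5) by (intro mult_strict_mono) auto
  have "0 \<le> 1 - r^2/2" using rr by (simp add: power2_eq_square)
  with h1 have "(1 - r^2/2)^2 \<le> \<bar>a \<bullet> b\<bar>^2" by (intro power_mono)
  moreover have "1 - r^2 \<le> (1 - r^2/2)^2"
    using assms(4) by (simp add: power2_eq_square algebra_simps zero_le_mult_iff)
  ultimately show ?thesis by simp
qed

theorem lemma5p2:
  fixes w :: "'v::finite \<Rightarrow> 'v \<Rightarrow> real"
    and f :: "'k::finite \<Rightarrow> 'v \<Rightarrow> real"
    and S :: "'v set" and r :: real
  assumes w_sym: "\<And>u v. w u v = w v u"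
    and w_nonneg: "\<And>u v. 0 \<le> w u v"
    and orthonormal: "\<And>i j. l2_inner w (f i) (f j) = (if i = j then 1 else 0)"
    and diam: "diam_dbar f (S \<inter> VF f) \<le> r"
    and r_pos: "0 < r" and r_lt1: "r < 1"
  shows "energy w f S \<le> 1 / (real CARD('k) * (1 - r\<^sup>2)) * energy w f UNIV"
proof -
  have dpos: "0 \<le> deg w v" for v by (simp add: deg_def sum_nonneg w_nonneg)
  have "r*r < 1*1" using r_pos r_lt1 by (intro mult_strict_mono) auto
  hence r2: "0 < 1 - r^2" by (simp add: power2_eq_square)
  have EV: "energy w f UNIV = real CARD('k)"
  proof -
    have "energy w f UNIV = (\<Sum>v\<in>UNIV. \<Sum>i\<in>UNIV. deg w v * f i v * f i v)"
      by (simp add: energy_def power2_norm_eq_inner inner_vec_def Fvec_def sum_distrib_left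
          algebra_simps)
    also have "\<dots> = (\<Sum>i\<in>UNIV. \<Sum>v\<in>UNIV. deg w v * f i v * f i v)"
      by (rule sum.swap)
    also have "\<dots> = (\<Sum>i\<in>UNIV. l2_inner w (f i) (f i))"
      by (simp add: l2_inner_def)
    also have "\<dots> = real CARD('k)" by (simp add: orthonormal)
    finally show ?thesis .
  qed
  have ES: "energy w f S \<le> 1 / (1 - r^2)"
  proof (cases "S \<inter> VF f = {}")
    case True
    hence "\<forall>v\<in>S. Fvec f v = 0" by (auto simp: VF_def)
    hence "energy w f S = 0" by (simp add: energy_def)
    thus ?thesis using r2 by simp
  next
    case False
    then obtain u where u: "u \<in> S" "Fvec f u \<noteq> 0" by (auto simp: VF_def)
    define x where "x = (1 / norm (Fvec f u)) *\<^sub>R Fvec f u"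
    have nx: "norm x = 1" using u by (simp add: x_def)
    have dle: "dbar f u v \<le> r" if "v \<in> S" "Fvec f v \<noteq> 0" for v
    proof -
      let ?A = "{dbar f u v | u v. u \<in> S \<inter> VF f \<and> v \<in> S \<inter> VF f}"
      have fin: "finite ?A"
      proof -
        have "?A \<subseteq> (\<lambda>(a,b). dbar f a b) ` UNIV" by auto
        thus ?thesis by (rule finite_subset) simp
      qed
      have "dbar f u v \<in> ?A" using u that by (auto simp: VF_def)
      hence "dbar f u v \<le> Sup ?A" using fin by (simp add: le_cSup_finite)
      thus ?thesis using diam False by (simp add: diam_dbar_def)
    qed
    have pt: "(1 - r^2) * (deg w v * (norm (Fvec f v))^2) \<le> deg w v * (x \<bullet> Fvec f v)^2"
      if "v \<in> S" for v
    proof (cases "Fvec f v = 0")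
      case True thus ?thesis by simp
    next
      case False
      define b where "b = (1 / norm (Fvec f v)) *\<^sub>R Fvec f v"
      have nb: "norm b = 1" using False by (simp add: b_def)
      have "1 - r^2 \<le> (x \<bullet> b)^2"
        by (rule unit_bound[OF nx nb _ r_pos r_lt1])
           (use dle[OF that False] in \<open>simp add: dbar_def x_def b_def\<close>)
      hence h: "(1 - r^2) * (norm (Fvec f v))^2 \<le> (x \<bullet> b)^2 * (norm (Fvec f v))^2"
        by (rule mult_right_mono) simp
      have "x \<bullet> Fvec f v = norm (Fvec f v) * (x \<bullet> b)"
        using False by (simp add: b_def)
      hence "(x \<bullet> Fvec f v)^2 = (x \<bullet> b)^2 * (norm (Fvec f v))^2"
        by (simp add: power_mult_distrib)
      with h have "(1 - r^2) * (norm (Fvec f v))^2 \<le> (x \<bullet> Fvec f v)^2" by simp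
      thus ?thesis using dpos[of v]
        by (metis mult.left_commute mult_left_mono)
    qed
    have "(1 - r^2) * energy w f S \<le> (\<Sum>v\<in>S. deg w v * (x \<bullet> Fvec f v)^2)"
      unfolding energy_def sum_distrib_left by (rule sum_mono) (rule pt)
    also have "\<dots> \<le> (\<Sum>v\<in>UNIV. deg w v * (x \<bullet> Fvec f v)^2)"
      by (rule sum_mono2) (auto simp: dpos)
    also have "\<dots> = (\<Sum>i\<in>UNIV. (x$i)^2)" by (rule sum_identity[OF orthonormal])
    also have "\<dots> = 1" using nx by (simp add: norm_eq_1 inner_vec_def power2_eq_square)
    finally show ?thesis using r2 by (simp add: field_simps)
  qed
  have k: "0 < real CARD('k)" by simp
  have "1 / (real CARD('k) * (1 - r\<^sup>2)) * energy w f UNIV = 1 / (1 - r^2)"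
    unfolding EV using k r2 by (simp add: field_simps)
  thus ?thesis using ES by simp
qed

end
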